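(* Let $\Gamma\subseteq\mathrm{Aff}(\mathbb{R}^n)$ be an $n$-dimensional crystallographic group whose subgroup of pure translations is exactly $\mathbb{Z}^n$. Then there exists a finite set $\Delta^{base}\subseteq\mathbb{R}^n$, with $\xi_{(d,I_n)}\in\mathrm{Aut}(\Gamma)$ for every $d\in\Delta^{base}$, such that the following holds: whenever $\varphi,\psi\in\mathrm{Aut}(\Gamma)$ satisfy $\varphi|_{\mathbb{Z}^n}=\psi|_{\mathbb{Z}^n}$, there exist $d^{base}\in\Delta^{base}$ and an inner automorphism $\iota$ of $\Gamma$ such that $\psi=\iota\circ\xi_{(d^{base},I_n)}\circ\varphi$.
   Context: $\mathrm{Aff}(\mathbb{R}^n)=\mathbb{R}^n\rtimes\mathrm{GL}_n(\mathbb{R})$ with multiplication $(d_1,D_1)(d_2,D_2)=(d_1+D_1d_2,D_1D_2)$. An $n$-dimensional crystallographic group is a discrete cocompact subgroup of $\mathbb{R}^n\rtimes O(n)$; here it is realised inside $\mathrm{Aff}(\mathbb{R}^n)$ such that $\Gamma\cap\mathbb{R}^n=\{(z,I_n)\mid z\in\mathbb{Z}^n\}$, identified with $\mathbb{Z}^n$; all other elements then have linear part in $\mathrm{GL}_n(\mathbb{Z})$. For $(d,D)\in\mathrm{Aff}(\mathbb{R}^n)$, $\xi_{(d,D)}$ denotes the map $\gamma\mapsto(d,D)\gamma(d,D)^{-1}$. Every automorphism of $\Gamma$ is of the form $\xi_{(d,D)}$ for some $(d,D)\in\mathrm{Aff}(\mathbb{R}^n)$. *)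

theory Defs
  imports "HOL-Analysis.Analysis"
begin

text \<open>Elements of Aff(R^n) are represented as pairs (d, D) with D invertible.\<close>

type_synonym 'n aff = "(real^'n) \<times> (real^'n^'n)"

definition aff_mult :: "'n::finite aff \<Rightarrow> 'n aff \<Rightarrow> 'n aff" where
  "aff_mult g h = (fst g + (snd g *v fst h), snd g ** snd h)"

definition aff_one :: "'n::finite aff" where
  "aff_one = (0, mat 1)"

definition aff_inv :: "'n::finite aff \<Rightarrow> 'n aff" where
  "aff_inv g = (- (matrix_inv (snd g) *v fst g), matrix_inv (snd g))"

definition Aff :: "'n::finite aff set" where
  "Aff = {g. invertible (snd g)}"

definition aff_apply :: "'n::finite aff \<Rightarrow> real^'n \<Rightarrow> real^'n" where
  "aff_apply g x = fst g + (snd g *v x)"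

definition xi :: "'n::finite aff \<Rightarrow> 'n aff \<Rightarrow> 'n aff" where
  "xi g \<gamma> = aff_mult (aff_mult g \<gamma>) (aff_inv g)"

definition aff_subgroup :: "'n::finite aff set \<Rightarrow> bool" where
  "aff_subgroup G \<longleftrightarrow> G \<subseteq> Aff \<and> aff_one \<in> G \<and>
     (\<forall>g\<in>G. \<forall>h\<in>G. aff_mult g h \<in> G) \<and> (\<forall>g\<in>G. aff_inv g \<in> G)"

text \<open>Cocompactness is expressed via a compact set whose translates cover R^n
  (equivalent to compactness of (R^n x| O(n))/Gamma since O(n) is compact).\<close>
definition crystallographic :: "'n::finite aff set \<Rightarrow> bool" where
  "crystallographic G \<longleftrightarrow> aff_subgroup G \<and>
     (\<forall>g\<in>G. orthogonal_matrix (snd g)) \<and>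
     (\<forall>g\<in>G. \<not> g islimpt G) \<and>
     (\<exists>K. compact K \<and> (\<forall>x. \<exists>g\<in>G. \<exists>k\<in>K. x = aff_apply g k))"

definition int_vec :: "real^'n \<Rightarrow> bool" where
  "int_vec z \<longleftrightarrow> (\<forall>i. z $ i \<in> \<int>)"

text \<open>A crystallographic group realised inside Aff(R^n) (i.e. affinely conjugate
  to a crystallographic group) whose pure translations are exactly Z^n.\<close>
definition cryst_group_Zn :: "'n::finite aff set \<Rightarrow> bool" where
  "cryst_group_Zn G \<longleftrightarrow> aff_subgroup G \<and>
     (\<exists>c\<in>Aff. crystallographic (xi c ` G)) \<and>
     {g\<in>G. snd g = mat 1} = {(z, mat 1) | z. int_vec z}"

definition is_aut :: "'n::finite aff set \<Rightarrow> ('n aff \<Rightarrow> 'n aff) \<Rightarrow> bool" where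
  "is_aut G \<phi> \<longleftrightarrow> bij_betw \<phi> G G \<and>
     (\<forall>g\<in>G. \<forall>h\<in>G. \<phi> (aff_mult g h) = aff_mult (\<phi> g) (\<phi> h))"

end

theory Submission
  imports Defs
begin

lemma minv: fixes A :: "real^'n^'n" assumes "invertible A"
  shows "A ** matrix_inv A = mat 1" "matrix_inv A ** A = mat 1"
proof -
  have "\<exists>A'. A ** A' = mat 1 \<and> A' ** A = mat 1" using assms by (simp add: invertible_def)
  from someI_ex[OF this] show "A ** matrix_inv A = mat 1" "matrix_inv A ** A = mat 1"
    by (simp_all add: matrix_inv_def)
qed

lemma minv1: "matrix_inv (mat 1 :: real^'n^'n) = mat 1"
proof -
  have "invertible (mat 1 :: real^'n^'n)" unfolding invertible_def by (intro exI[of _ "mat 1"]) simp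
  from minv(1)[OF this] show ?thesis by simp
qed

lemma aff_mult_simp: "aff_mult (a,A) (b,B) = (a + A *v b, A ** B)"
  by (simp add: aff_mult_def)

lemma aff_inv_T: "aff_inv (u, mat 1 :: real^'n^'n) = (-u, mat 1)"
  by (simp add: aff_inv_def minv1)

lemma xi_T: "xi (u, mat 1) (a, A) = (a + u - A *v u, A)"
  by (simp add: xi_def aff_inv_T aff_mult_simp vec.neg algebra_simps)

lemma orth_norm: assumes "orthogonal_matrix (Q::real^'n^'n)" shows "norm (Q *v x) = norm x"
proof -
  have "orthogonal_transformation ((*v) Q)"
    using assms by (simp add: orthogonal_transformation_matrix matrix_vector_mul_linear matrix_of_matrix_vector_mul)
  thus ?thesis by (simp add: orthogonal_transformation_norm)
qed

lemma finite_vecs: assumes "finite T" shows "finite {x::'a^'n::finite. \<forall>i. x$i \<in> T}"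
proof -
  have "{x::'a^'n. \<forall>i. x$i \<in> T} \<subseteq> vec_lambda ` (PiE UNIV (\<lambda>_. T))"
  proof
    fix x :: "'a^'n" assume "x \<in> {x. \<forall>i. x$i \<in> T}"
    hence "(\<lambda>i. x$i) \<in> PiE UNIV (\<lambda>_. T)" by (auto simp: PiE_iff)
    thus "x \<in> vec_lambda ` (PiE UNIV (\<lambda>_. T))" by (intro image_eqI[of _ _ "(\<lambda>i. x$i)"]) simp_all
  qed
  moreover have "finite (vec_lambda ` (PiE UNIV (\<lambda>_. T)))" using assms by (intro finite_imageI finite_PiE) auto
  ultimately show ?thesis by (rule finite_subset)
qed

lemma finite_ints_bounded: "finite {x::real. x \<in> \<int> \<and> \<bar>x\<bar> \<le> K}"
proof -
  have "{x::real. x \<in> \<int> \<and> \<bar>x\<bar> \<le> K} \<subseteq> of_int ` {-\<lceil>K\<rceil>..\<lceil>K\<rceil>}"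
  proof
    fix x assume "x \<in> {x::real. x \<in> \<int> \<and> \<bar>x\<bar> \<le> K}"
    then obtain m where m: "x = of_int m" "\<bar>of_int m\<bar> \<le> K" by (auto elim: Ints_cases)
    hence "-\<lceil>K\<rceil> \<le> m \<and> m \<le> \<lceil>K\<rceil>" by linarith
    thus "x \<in> of_int ` {-\<lceil>K\<rceil>..\<lceil>K\<rceil>}" using m by auto
  qed
  thus ?thesis by (rule finite_subset) auto
qed

lemma finite_frac: assumes "N > 0" shows "finite {x::real. of_nat N * x \<in> \<int> \<and> 0 \<le> x \<and> x < 1}"
proof -
  have "{x::real. of_nat N * x \<in> \<int> \<and> 0 \<le> x \<and> x < 1} \<subseteq> (\<lambda>m. of_int m / of_nat N) ` {0..int N}"
  proof
    fix x assume "x \<in> {x::real. of_nat N * x \<in> \<int> \<and> 0 \<le> x \<and> x < 1}"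
    then obtain m where m: "of_nat N * x = of_int m" "0 \<le> x" "x < 1" by (auto elim: Ints_cases)
    hence x: "x = of_int m / of_nat N" using assms by (simp add: field_simps)
    have "0 \<le> real N * x" using m by (intro mult_nonneg_nonneg) auto
    moreover have "real N * x \<le> real N" using m(3) by (intro mult_left_le) auto
    ultimately have "0 \<le> (of_int m::real)" "of_int m \<le> (of_nat N::real)" using m by auto
    hence "m \<in> {0..int N}" by simp
    thus "x \<in> (\<lambda>m. of_int m / of_nat N) ` {0..int N}" using x by auto
  qed
  thus ?thesis by (rule finite_subset) auto
qed

lemma mat_eq_basis: fixes A B :: "real^'n^'m"
  assumes "\<And>j. A *v axis j 1 = B *v axis j 1" shows "A = B"
  using assms by (simp add: matrix_vector_mult_basis column_def vec_eq_iff)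


definition cls :: "'n::finite aff set \<Rightarrow> 'n aff \<Rightarrow> 'n aff set" where
  "cls G y = {u\<in>G. \<exists>k\<in>G. aff_mult k y = aff_mult u k}"

lemma int_vec_axis: "int_vec (axis j (1::real))"
  by (simp add: int_vec_def axis_def)

lemma int_vec_add: "int_vec x \<Longrightarrow> int_vec y \<Longrightarrow> int_vec (x + y)"
  by (simp add: int_vec_def)
lemma int_vec_minus: "int_vec x \<Longrightarrow> int_vec (- x)"
  by (simp add: int_vec_def)
lemma int_vec_diff: "int_vec x \<Longrightarrow> int_vec y \<Longrightarrow> int_vec (x - y)"
  by (simp add: int_vec_def)
lemma int_vec_scale: "int_vec x \<Longrightarrow> int_vec (of_nat k *\<^sub>R x)"
  by (simp add: int_vec_def)

context
  fixes \<Gamma> :: "'n::finite aff set"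
  assumes G: "cryst_group_Zn \<Gamma>"
begin

lemma sub: "aff_subgroup \<Gamma>" using G by (simp add: cryst_group_Zn_def)

lemma mult_in: "g \<in> \<Gamma> \<Longrightarrow> h \<in> \<Gamma> \<Longrightarrow> aff_mult g h \<in> \<Gamma>"
  using sub by (simp add: aff_subgroup_def)
lemma inv_in: "g \<in> \<Gamma> \<Longrightarrow> aff_inv g \<in> \<Gamma>"
  using sub by (simp add: aff_subgroup_def)
lemma one_in: "(0, mat 1) \<in> \<Gamma>"
  using sub by (simp add: aff_subgroup_def aff_one_def)
lemma inv_mat: "(a, A) \<in> \<Gamma> \<Longrightarrow> invertible A"
  using sub by (auto simp: aff_subgroup_def Aff_def)

lemma T_in: "(z, mat 1) \<in> \<Gamma> \<longleftrightarrow> int_vec z"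
proof -
  have eq: "{g\<in>\<Gamma>. snd g = mat 1} = {(z, mat 1) | z. int_vec z}" using G by (simp add: cryst_group_Zn_def)
  have "(z, mat 1) \<in> \<Gamma> \<longleftrightarrow> (z, mat 1) \<in> {g\<in>\<Gamma>. snd g = mat 1}" by simp
  thus ?thesis unfolding eq by auto
qed

lemma transl_int: "(z, B) \<in> \<Gamma> \<Longrightarrow> B = mat 1 \<Longrightarrow> int_vec z"
  using T_in by simp

lemma conj_T: assumes "(a, A) \<in> \<Gamma>"
  shows "aff_mult (aff_mult (a, A) (w, mat 1)) (aff_inv (a, A)) = (A *v w, mat 1)"
  using minv[OF inv_mat[OF assms]]
  by (simp add: aff_mult_simp aff_inv_def vec.neg matrix_vector_mul_assoc algebra_simps)

lemma int_mat: assumes "(a, A) \<in> \<Gamma>" "int_vec w" shows "int_vec (A *v w)"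
proof -
  have "aff_mult (aff_mult (a, A) (w, mat 1)) (aff_inv (a, A)) \<in> \<Gamma>"
    using assms by (intro mult_in inv_in) (auto simp: T_in)
  thus ?thesis using conj_T[OF assms(1)] T_in by simp
qed

lemma int_entry: assumes "(a, A) \<in> \<Gamma>" shows "A $ i $ j \<in> \<int>"
proof -
  have "int_vec (A *v axis j 1)" by (rule int_mat[OF assms int_vec_axis])
  thus ?thesis by (simp add: int_vec_def matrix_vector_mult_basis column_def)
qed

lemma finite_P: "finite (snd ` \<Gamma>)"
proof -
  obtain c where c: "c \<in> Aff" "crystallographic (xi c ` \<Gamma>)" using G by (auto simp: cryst_group_Zn_def)
  obtain c0 C where cC: "c = (c0, C)" by (cases c)
  have iC: "invertible C" using c(1) cC by (simp add: Aff_def)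
  obtain B1 where B1: "\<And>x. norm (matrix_inv C *v x) \<le> B1 * norm x" "B1 > 0"
    using linear_bounded_pos[OF matrix_vector_mul_linear[of "matrix_inv C"]] by blast
  define K where "K = B1 * (\<Sum>j\<in>UNIV. norm (C *v axis j 1))"
  have bound: "\<bar>A $ i $ j\<bar> \<le> K" if AP: "A \<in> snd ` \<Gamma>" for A i j
  proof -
    obtain a where a: "(a, A) \<in> \<Gamma>" using AP by force
    have "orthogonal_matrix (snd (xi c (a, A)))" using c(2) a by (auto simp: crystallographic_def)
    hence O: "orthogonal_matrix ((C ** A) ** matrix_inv C)"
      using cC by (simp add: xi_def aff_mult_simp aff_inv_def)
    let ?O = "(C ** A) ** matrix_inv C"
    have AO: "A = matrix_inv C ** ?O ** C"
    proof -
      have "matrix_inv C ** ?O ** C = (matrix_inv C ** C) ** A ** (matrix_inv C ** C)"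
        by (simp add: matrix_mul_assoc)
      thus ?thesis using minv[OF iC] by simp
    qed
    have "\<bar>A $ i $ j\<bar> \<le> norm (A *v axis j 1)"
      using component_le_norm_cart[of "A *v axis j 1" i]
      by (simp add: matrix_vector_mult_basis column_def)
    also have "A *v axis j 1 = matrix_inv C *v (?O *v (C *v axis j 1))"
      by (subst AO) (simp add: matrix_vector_mul_assoc matrix_mul_assoc)
    also have "norm (matrix_inv C *v (?O *v (C *v axis j 1))) \<le> B1 * norm (?O *v (C *v axis j 1))"
      by (rule B1)
    also have "\<dots> = B1 * norm (C *v axis j 1)" using orth_norm[OF O] by simp
    also have "\<dots> \<le> K" unfolding K_def using B1(2)
      by (intro mult_left_mono member_le_sum) auto
    finally show ?thesis .
  qed
  have "snd ` \<Gamma> \<subseteq> {M. \<forall>i. M $ i \<in> {x. \<forall>j. x $ j \<in> {x::real. x \<in> \<int> \<and> \<bar>x\<bar> \<le> K}}}"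
    using bound int_entry by force
  moreover have "finite {M::real^'n^'n. \<forall>i. M $ i \<in> {x. \<forall>j. x $ j \<in> {x::real. x \<in> \<int> \<and> \<bar>x\<bar> \<le> K}}}"
    by (intro finite_vecs finite_ints_bounded)
  ultimately show ?thesis by (rule finite_subset)
qed


lemma cls_T_finite: "finite (cls \<Gamma> (w, mat 1))"
proof -
  have "cls \<Gamma> (w, mat 1) \<subseteq> (\<lambda>A. (A *v w, mat 1)) ` (snd ` \<Gamma>)"
  proof
    fix u assume "u \<in> cls \<Gamma> (w, mat 1)"
    then obtain k where k: "k \<in> \<Gamma>" "aff_mult k (w, mat 1) = aff_mult u k" by (auto simp: cls_def)
    obtain a A where kA: "k = (a, A)" by (cases k)
    obtain c C where uC: "u = (c, C)" by (cases u)
    have eqs: "a + A *v w = c + C *v a" "A = C ** A" using k(2) kA uC by (auto simp: aff_mult_simp)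
    have iA: "invertible A" using k(1) kA inv_mat by simp
    have "C = C ** (A ** matrix_inv A)" using minv[OF iA] by simp
    also have "\<dots> = A ** matrix_inv A" using eqs(2) by (simp add: matrix_mul_assoc)
    finally have C1: "C = mat 1" using minv[OF iA] by simp
    hence "c = A *v w" using eqs(1) by (simp add: algebra_simps)
    hence "u = (\<lambda>A. (A *v w, mat 1)) A" using uC C1 by simp
    moreover have "A \<in> snd ` \<Gamma>" using k(1) kA by force
    ultimately show "u \<in> (\<lambda>A. (A *v w, mat 1)) ` (snd ` \<Gamma>)" by blast
  qed
  thus ?thesis using finite_P by (meson finite_imageI finite_subset)
qed

lemma cls_infinite: assumes y: "(a, A) \<in> \<Gamma>" and A1: "A \<noteq> mat 1"
  shows "infinite (cls \<Gamma> (a, A))"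
proof -
  obtain j where j: "A *v axis j 1 \<noteq> axis j 1"
    using A1 mat_eq_basis[of A "mat 1"] by auto
  define e :: "real^'n" where "e = axis j 1"
  define f where "f = (\<lambda>k::nat. (a + of_nat k *\<^sub>R (e - A *v e), A))"
  have ne: "e - A *v e \<noteq> 0" using j e_def by simp
  have "inj f"
  proof
    fix k l assume "f k = f l"
    hence "of_nat k *\<^sub>R (e - A *v e) = of_nat l *\<^sub>R (e - A *v e)" by (simp add: f_def)
    hence "(of_nat k - of_nat l) *\<^sub>R (e - A *v e) = 0" by (simp add: algebra_simps)
    thus "k = l" using ne by simp
  qed
  moreover have "range f \<subseteq> cls \<Gamma> (a, A)"
  proof
    fix u assume "u \<in> range f"
    then obtain k where u: "u = f k" by auto
    define z where "z = of_nat k *\<^sub>R e"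
    have zi: "int_vec z" unfolding z_def e_def by (intro int_vec_scale int_vec_axis)
    have fk: "f k = aff_mult (aff_mult (z, mat 1) (a, A)) (-z, mat 1)"
      by (simp add: f_def z_def aff_mult_simp vec.neg matrix_vector_mult_scaleR algebra_simps)
    have "f k \<in> \<Gamma>" unfolding fk using zi y by (intro mult_in) (auto simp: T_in int_vec_minus)
    moreover have "aff_mult (z, mat 1) (a, A) = aff_mult (f k) (z, mat 1)"
      by (simp add: f_def z_def aff_mult_simp matrix_vector_mult_scaleR algebra_simps)
    ultimately show "u \<in> cls \<Gamma> (a, A)" using u zi by (auto simp: cls_def T_in)
  qed
  ultimately show ?thesis by (meson infinite_iff_countable_subset infinite_super range_inj_infinite)
qed

lemma aut_trans: assumes phi: "is_aut \<Gamma> \<phi>" and x: "x \<in> \<Gamma>" and fx: "\<phi> x = (w, mat 1)"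
  shows "snd x = mat 1"
proof (rule ccontr)
  assume nx: "snd x \<noteq> mat 1"
  have sub: "\<phi> ` cls \<Gamma> x \<subseteq> cls \<Gamma> (w, mat 1)"
  proof
    fix v assume "v \<in> \<phi> ` cls \<Gamma> x"
    then obtain u k where u: "v = \<phi> u" "u \<in> \<Gamma>" "k \<in> \<Gamma>" "aff_mult k x = aff_mult u k"
      by (auto simp: cls_def)
    have "aff_mult (\<phi> k) (\<phi> x) = aff_mult (\<phi> u) (\<phi> k)"
      using phi u x by (metis is_aut_def)
    moreover have "\<phi> k \<in> \<Gamma>" "\<phi> u \<in> \<Gamma>" using phi u by (auto simp: is_aut_def bij_betw_def)
    ultimately show "v \<in> cls \<Gamma> (w, mat 1)" using fx u by (auto simp: cls_def)
  qed
  have "finite (\<phi> ` cls \<Gamma> x)" using finite_subset[OF sub cls_T_finite] .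
  moreover have "inj_on \<phi> (cls \<Gamma> x)"
    using phi by (auto simp: is_aut_def bij_betw_def cls_def intro: inj_on_subset)
  ultimately have "finite (cls \<Gamma> x)" using finite_imageD by blast
  moreover have "infinite (cls \<Gamma> x)" using cls_infinite[of "fst x" "snd x"] x nx by simp
  ultimately show False by simp
qed


lemma tinv: assumes "(a, A) \<in> \<Gamma>" shows "aff_mult (a', A) (aff_inv (a, A)) = (a' - a, mat 1)"
  using minv[OF inv_mat[OF assms]]
  by (simp add: aff_mult_simp aff_inv_def vec.neg matrix_vector_mul_assoc)

lemma tinv_int: assumes "(a, A) \<in> \<Gamma>" "(a', A) \<in> \<Gamma>" shows "int_vec (a' - a)"
proof -
  have "aff_mult (a', A) (aff_inv (a, A)) \<in> \<Gamma>" using assms by (intro mult_in inv_in)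
  thus ?thesis using tinv[OF assms(1)] T_in by simp
qed

lemma main:
  assumes th: "is_aut \<Gamma> \<theta>" and fixT: "\<forall>w. int_vec w \<longrightarrow> \<theta> (w, mat 1) = (w, mat 1)"
  shows "\<exists>d. (\<forall>i. of_nat (card (snd ` \<Gamma>)) * d$i \<in> \<int> \<and> 0 \<le> d$i \<and> d$i < 1) \<and>
     is_aut \<Gamma> (xi (d, mat 1)) \<and> (\<exists>g\<in>\<Gamma>. \<forall>\<eta>\<in>\<Gamma>. \<theta> \<eta> = xi g (xi (d, mat 1) \<eta>))"
proof -
  have hom: "\<And>g h. g \<in> \<Gamma> \<Longrightarrow> h \<in> \<Gamma> \<Longrightarrow> \<theta> (aff_mult g h) = aff_mult (\<theta> g) (\<theta> h)"
    using th by (simp add: is_aut_def)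
  have thin: "\<And>g. g \<in> \<Gamma> \<Longrightarrow> \<theta> g \<in> \<Gamma>" using th by (auto simp: is_aut_def bij_betw_def)
  have lin: "snd (\<theta> (a, A)) = A" if eta: "(a, A) \<in> \<Gamma>" for a A
  proof -
    obtain b B where bB: "\<theta> (a, A) = (b, B)" by (cases "\<theta> (a, A)")
    have "B *v axis j 1 = A *v axis j 1" for j
    proof -
      define w :: "real^'n" where "w = axis j 1"
      have wi: "int_vec w" unfolding w_def by (rule int_vec_axis)
      have Aw: "int_vec (A *v w)" by (rule int_mat[OF eta wi])
      have "aff_mult (a, A) (w, mat 1) = aff_mult (A *v w, mat 1) (a, A)" by (simp add: aff_mult_simp add.commute)
      hence "\<theta> (aff_mult (a, A) (w, mat 1)) = \<theta> (aff_mult (A *v w, mat 1) (a, A))" by simp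
      hence "aff_mult (b, B) (w, mat 1) = aff_mult (A *v w, mat 1) (b, B)"
        using hom eta wi Aw fixT T_in bB by simp
      thus ?thesis unfolding w_def by (simp add: aff_mult_simp)
    qed
    hence "B = A" by (rule mat_eq_basis)
    thus ?thesis using bB by simp
  qed
  define rep where "rep = (\<lambda>A. SOME \<eta>. \<eta> \<in> \<Gamma> \<and> snd \<eta> = A)"
  define P where "P = snd ` \<Gamma>"
  have rep: "rep A \<in> \<Gamma> \<and> snd (rep A) = A" if "A \<in> P" for A
  proof -
    have "\<exists>\<eta>. \<eta> \<in> \<Gamma> \<and> snd \<eta> = A" using that P_def by auto
    thus ?thesis unfolding rep_def by (rule someI_ex)
  qed
  define D where "D = (\<lambda>A. fst (\<theta> (rep A)) - fst (rep A))"
  have thD: "\<theta> (a, A) = (a + D A, A)" if eta: "(a, A) \<in> \<Gamma>" for a A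
  proof -
    have AP: "A \<in> P" using eta P_def by force
    obtain r where r: "rep A = (r, A)" using rep[OF AP] by (cases "rep A") auto
    have rG: "(r, A) \<in> \<Gamma>" using rep[OF AP] r by simp
    have u: "int_vec (a - r)" by (rule tinv_int[OF rG eta])
    have "(a, A) = aff_mult (a - r, mat 1) (r, A)" by (simp add: aff_mult_simp)
    hence "\<theta> (a, A) = aff_mult (\<theta> (a - r, mat 1)) (\<theta> (r, A))" using hom u rG T_in by metis
    also have "\<theta> (a - r, mat 1) = (a - r, mat 1)" using fixT u by simp
    also have "\<theta> (r, A) = (fst (\<theta> (r, A)), A)" using lin[OF rG] by (cases "\<theta> (r, A)") simp
    finally show ?thesis using r by (simp add: D_def aff_mult_simp algebra_simps)
  qed
  have Dint: "int_vec (D A)" if AP: "A \<in> P" for A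
  proof -
    obtain r where r: "rep A = (r, A)" using rep[OF AP] by (cases "rep A") auto
    have rG: "(r, A) \<in> \<Gamma>" using rep[OF AP] r by simp
    have "(r + D A, A) \<in> \<Gamma>" using thin[OF rG] thD[OF rG] by simp
    from tinv_int[OF rG this] show ?thesis by simp
  qed
  have cocyc: "D (A ** B) = D A + A *v D B" if AP: "A \<in> P" and BP: "B \<in> P" for A B
  proof -
    obtain r where r: "rep A = (r, A)" using rep[OF AP] by (cases "rep A") auto
    have rG: "(r, A) \<in> \<Gamma>" using rep[OF AP] r by simp
    obtain q where q: "rep B = (q, B)" using rep[OF BP] by (cases "rep B") auto
    have qG: "(q, B) \<in> \<Gamma>" using rep[OF BP] q by simp
    have pG: "(r + A *v q, A ** B) \<in> \<Gamma>" using mult_in[OF rG qG] by (simp add: aff_mult_simp)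
    have "\<theta> (aff_mult (r, A) (q, B)) = aff_mult (\<theta> (r, A)) (\<theta> (q, B))" by (rule hom[OF rG qG])
    hence "(r + A *v q + D (A ** B), A ** B) = aff_mult (r + D A, A) (q + D B, B)"
      using thD[OF rG] thD[OF qG] thD[OF pG] by (simp add: aff_mult_simp)
    thus ?thesis by (simp add: aff_mult_simp algebra_simps)
  qed
  have finP: "finite P" using finite_P P_def by simp
  have "mat 1 \<in> P" using one_in P_def by force
  hence Npos: "card P > 0" using finP card_gt_0_iff by blast
  define N where "N = card P"
  define S where "S = (\<Sum>B\<in>P. D B)"
  define v where "v = (1 / real N) *\<^sub>R S"
  have Dv: "D A = v - A *v v" if AP: "A \<in> P" for A
  proof -
    have iA: "invertible A"
      using AP P_def inv_mat by force
    have bij: "bij_betw ((**) A) P P"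
    proof (rule bij_betwI')
      fix B C assume "B \<in> P" "C \<in> P"
      show "(A ** B = A ** C) = (B = C)"
      proof
        assume "A ** B = A ** C"
        hence "matrix_inv A ** (A ** B) = matrix_inv A ** (A ** C)" by simp
        thus "B = C" using minv[OF iA] by (simp add: matrix_mul_assoc)
      qed simp
    next
      fix B assume BP: "B \<in> P"
      obtain r where r: "rep A = (r, A)" using rep[OF AP] by (cases "rep A") auto
      have rG: "(r, A) \<in> \<Gamma>" using rep[OF AP] r by simp
      obtain q where q: "rep B = (q, B)" using rep[OF BP] by (cases "rep B") auto
      have qG: "(q, B) \<in> \<Gamma>" using rep[OF BP] q by simp
      show "A ** B \<in> P" using mult_in[OF rG qG] P_def by (force simp: aff_mult_simp)
    next
      fix C assume CP: "C \<in> P"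
      obtain r where r: "rep A = (r, A)" using rep[OF AP] by (cases "rep A") auto
      have rG: "(r, A) \<in> \<Gamma>" using rep[OF AP] r by simp
      obtain q where q: "rep C = (q, C)" using rep[OF CP] by (cases "rep C") auto
      have qG: "(q, C) \<in> \<Gamma>" using rep[OF CP] q by simp
      have "snd (aff_mult (aff_inv (r, A)) (q, C)) = matrix_inv A ** C"
        by (simp add: aff_mult_simp aff_inv_def)
      hence "matrix_inv A ** C \<in> P" using mult_in[OF inv_in[OF rG] qG] P_def by force
      moreover have "C = A ** (matrix_inv A ** C)" using minv[OF iA] by (simp add: matrix_mul_assoc)
      ultimately show "\<exists>B\<in>P. C = A ** B" by blast
    qed
    have "S = (\<Sum>B\<in>P. D (A ** B))" unfolding S_def using sum.reindex_bij_betw[OF bij, of D] by simp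
    also have "\<dots> = (\<Sum>B\<in>P. D A + A *v D B)" using cocyc AP by (intro sum.cong) auto
    also have "\<dots> = real N *\<^sub>R D A + A *v S"
      by (simp add: sum.distrib S_def vec.sum N_def scaleR_conv_of_real)
    finally have "real N *\<^sub>R D A = S - A *v S" by (simp add: algebra_simps)
    hence eqN: "(1 / real N) *\<^sub>R (real N *\<^sub>R D A) = (1 / real N) *\<^sub>R (S - A *v S)" by simp
    have "(1 / real N) *\<^sub>R (real N *\<^sub>R D A) = D A" using Npos N_def by simp
    hence "D A = (1 / real N) *\<^sub>R (S - A *v S)" using eqN by simp
    thus ?thesis by (simp add: v_def algebra_simps matrix_vector_mult_scaleR)
  qed
  have Sint: "int_vec S" unfolding int_vec_def S_def
    using Dint by (auto simp: int_vec_def sum_component intro: Ints_sum)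
  define z :: "real^'n" where "z = (\<chi> i. of_int \<lfloor>v$i\<rfloor>)"
  define d where "d = v - z"
  have zi: "int_vec z" by (simp add: int_vec_def z_def)
  have dprops: "\<forall>i. real N * d$i \<in> \<int> \<and> 0 \<le> d$i \<and> d$i < 1"
  proof
    fix i
    have Nv: "real N * v$i = S$i" using Npos N_def by (simp add: v_def)
    have "real N * d$i = S$i - real N * of_int \<lfloor>v$i\<rfloor>" by (simp add: d_def z_def Nv[symmetric] algebra_simps)
    moreover have "S$i \<in> \<int>" using Sint int_vec_def by blast
    ultimately have "real N * d$i \<in> \<int>" by simp
    moreover have "0 \<le> d$i" "d$i < 1" by (simp_all add: d_def z_def) linarith+
    ultimately show "real N * d$i \<in> \<int> \<and> 0 \<le> d$i \<and> d$i < 1" by simp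
  qed
  have thv: "\<theta> (a, A) = (a + v - A *v v, A)" if "(a, A) \<in> \<Gamma>" for a A
    using thD[OF that] Dv[of A] that P_def by (force simp: algebra_simps)
  have key: "xi (z, mat 1) (xi (d, mat 1) \<eta>) = \<theta> \<eta>" if "\<eta> \<in> \<Gamma>" for \<eta>
    using that thv by (cases \<eta>) (simp add: xi_T d_def algebra_simps)
  have xd: "xi (d, mat 1) \<eta> = xi (-z, mat 1) (\<theta> \<eta>)" if "\<eta> \<in> \<Gamma>" for \<eta>
    using that thv by (cases \<eta>) (simp add: xi_T d_def vec.neg algebra_simps)
  have xin: "xi (u, mat 1) \<eta> \<in> \<Gamma>" if "int_vec u" "\<eta> \<in> \<Gamma>" for u \<eta>
    unfolding xi_def using that by (intro mult_in inv_in) (auto simp: T_in)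
  have xcancel: "xi (-u, mat 1) (xi (u, mat 1) \<eta>) = \<eta>" for u \<eta>
    by (cases \<eta>) (simp add: xi_T vec.neg algebra_simps)
  have xinj: "inj (xi (u, mat 1))" for u
    by (metis injI xcancel)
  have xhom: "xi (u, mat 1) (aff_mult g h) = aff_mult (xi (u, mat 1) g) (xi (u, mat 1) h)" for u g h
    by (cases g; cases h) (simp add: xi_T aff_mult_simp matrix_vector_mul_assoc algebra_simps)
  have aut: "is_aut \<Gamma> (xi (d, mat 1))"
    unfolding is_aut_def
  proof (intro conjI ballI xhom)
    show "bij_betw (xi (d, mat 1)) \<Gamma> \<Gamma>"
      unfolding bij_betw_def
    proof (intro conjI inj_on_subset[OF xinj] subset_UNIV equalityI subsetI)
      fix y assume "y \<in> xi (d, mat 1) ` \<Gamma>"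
      then obtain \<eta> where "\<eta> \<in> \<Gamma>" "y = xi (d, mat 1) \<eta>" by auto
      thus "y \<in> \<Gamma>" using xd thin xin[OF int_vec_minus[OF zi]] by simp
    next
      fix \<zeta> assume zG: "\<zeta> \<in> \<Gamma>"
      have yG: "xi (z, mat 1) \<zeta> \<in> \<Gamma>" by (rule xin[OF zi zG])
      have "xi (z, mat 1) \<zeta> \<in> \<theta> ` \<Gamma>" using yG th by (simp add: is_aut_def bij_betw_def)
      then obtain x where x: "x \<in> \<Gamma>" "\<theta> x = xi (z, mat 1) \<zeta>" by auto
      have "xi (d, mat 1) x = \<zeta>" using xd[OF x(1)] x(2) xcancel by simp
      thus "\<zeta> \<in> xi (d, mat 1) ` \<Gamma>" using x(1) by force
    qed
  qed
  have gG: "(z, mat 1) \<in> \<Gamma>" using zi T_in by simp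
  show ?thesis
    using dprops aut gG key unfolding N_def P_def by metis
qed

end


theorem corollary5p4:
  fixes \<Gamma> :: "'n::finite aff set"
  assumes "cryst_group_Zn \<Gamma>"
  shows "\<exists>\<Delta>. finite \<Delta> \<and> (\<forall>d\<in>\<Delta>. is_aut \<Gamma> (xi (d, mat 1))) \<and>
    (\<forall>\<phi> \<psi>. is_aut \<Gamma> \<phi> \<and> is_aut \<Gamma> \<psi> \<and>
        (\<forall>z. int_vec z \<longrightarrow> \<phi> (z, mat 1) = \<psi> (z, mat 1)) \<longrightarrow>
      (\<exists>d\<in>\<Delta>. \<exists>g\<in>\<Gamma>. \<forall>\<gamma>\<in>\<Gamma>. \<psi> \<gamma> = xi g (xi (d, mat 1) (\<phi> \<gamma>))))"
proof -
  define N where "N = card (snd ` \<Gamma>)"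
  have "mat 1 \<in> snd ` \<Gamma>" using one_in[OF assms] by force
  hence Npos: "N > 0" unfolding N_def using finite_P[OF assms] card_gt_0_iff by blast
  define \<Delta> where "\<Delta> = {d::real^'n. (\<forall>i. real N * d$i \<in> \<int> \<and> 0 \<le> d$i \<and> d$i < 1) \<and> is_aut \<Gamma> (xi (d, mat 1))}"
  have "\<Delta> \<subseteq> {d. \<forall>i. d$i \<in> {x. real N * x \<in> \<int> \<and> 0 \<le> x \<and> x < 1}}" unfolding \<Delta>_def by auto
  hence finD: "finite \<Delta>" using finite_vecs[OF finite_frac[OF Npos]] finite_subset by blast
  show ?thesis
  proof (intro exI[of _ \<Delta>] conjI allI impI ballI finD)
    fix d assume "d \<in> \<Delta>" thus "is_aut \<Gamma> (xi (d, mat 1))" by (simp add: \<Delta>_def)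
  next
    fix \<phi> \<psi> assume H: "is_aut \<Gamma> \<phi> \<and> is_aut \<Gamma> \<psi> \<and> (\<forall>z. int_vec z \<longrightarrow> \<phi> (z, mat 1) = \<psi> (z, mat 1))"
    have bphi: "bij_betw \<phi> \<Gamma> \<Gamma>" and bpsi: "bij_betw \<psi> \<Gamma> \<Gamma>"
      and hphi: "\<And>g h. g \<in> \<Gamma> \<Longrightarrow> h \<in> \<Gamma> \<Longrightarrow> \<phi> (aff_mult g h) = aff_mult (\<phi> g) (\<phi> h)"
      and hpsi: "\<And>g h. g \<in> \<Gamma> \<Longrightarrow> h \<in> \<Gamma> \<Longrightarrow> \<psi> (aff_mult g h) = aff_mult (\<psi> g) (\<psi> h)"
      using H by (auto simp: is_aut_def)
    have injphi: "inj_on \<phi> \<Gamma>" and imphi: "\<phi> ` \<Gamma> = \<Gamma>" using bphi by (auto simp: bij_betw_def)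
    define \<theta> where "\<theta> = \<psi> \<circ> inv_into \<Gamma> \<phi>"
    have invin: "inv_into \<Gamma> \<phi> x \<in> \<Gamma>" if "x \<in> \<Gamma>" for x
      using that imphi by (metis inv_into_into)
    have invf: "\<phi> (inv_into \<Gamma> \<phi> x) = x" if "x \<in> \<Gamma>" for x
      using that imphi by (metis f_inv_into_f)
    have th: "is_aut \<Gamma> \<theta>"
      unfolding is_aut_def
    proof (intro conjI ballI)
      show "bij_betw \<theta> \<Gamma> \<Gamma>" unfolding \<theta>_def
        using bij_betw_trans[OF bij_betw_inv_into[OF bphi] bpsi] .
    next
      fix x y assume x: "x \<in> \<Gamma>" and y: "y \<in> \<Gamma>"
      let ?x = "inv_into \<Gamma> \<phi> x" and ?y = "inv_into \<Gamma> \<phi> y"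
      have "\<phi> (aff_mult ?x ?y) = aff_mult x y" using hphi invin invf x y by simp
      moreover have "aff_mult ?x ?y \<in> \<Gamma>" using mult_in[OF assms] invin x y by simp
      ultimately have "inv_into \<Gamma> \<phi> (aff_mult x y) = aff_mult ?x ?y"
        using injphi by (metis inv_into_f_f)
      thus "\<theta> (aff_mult x y) = aff_mult (\<theta> x) (\<theta> y)"
        unfolding \<theta>_def using hpsi invin x y by simp
    qed
    have fixT: "\<forall>w. int_vec w \<longrightarrow> \<theta> (w, mat 1) = (w, mat 1)"
    proof (intro allI impI)
      fix w :: "real^'n" assume wi: "int_vec w"
      have wG: "(w, mat 1) \<in> \<Gamma>" using T_in[OF assms] wi by simp
      define x where "x = inv_into \<Gamma> \<phi> (w, mat 1)"
      have xG: "x \<in> \<Gamma>" and fx: "\<phi> x = (w, mat 1)" using invin invf wG x_def by auto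
      have aphi: "is_aut \<Gamma> \<phi>" using H by simp
      have sx: "snd x = mat 1" by (rule aut_trans[OF assms aphi xG fx])
      have xeq: "x = (fst x, mat 1)" using sx by (cases x) simp
      have "int_vec (fst x)" using xG xeq transl_int[OF assms, of "fst x" "mat 1"] by simp
      hence "\<psi> x = \<phi> x" using H xeq by metis
      thus "\<theta> (w, mat 1) = (w, mat 1)" unfolding \<theta>_def using fx x_def by simp
    qed
    obtain d g where d: "\<forall>i. real N * d$i \<in> \<int> \<and> 0 \<le> d$i \<and> d$i < 1" "is_aut \<Gamma> (xi (d, mat 1))"
      and g: "g \<in> \<Gamma>" "\<forall>\<eta>\<in>\<Gamma>. \<theta> \<eta> = xi g (xi (d, mat 1) \<eta>)"
      using main[OF assms th fixT] unfolding N_def by blast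
    have dD: "d \<in> \<Delta>" using d by (simp add: \<Delta>_def)
    have "\<forall>\<gamma>\<in>\<Gamma>. \<psi> \<gamma> = xi g (xi (d, mat 1) (\<phi> \<gamma>))"
    proof
      fix \<gamma> assume gam: "\<gamma> \<in> \<Gamma>"
      have "\<theta> (\<phi> \<gamma>) = \<psi> \<gamma>" unfolding \<theta>_def using injphi gam by (simp add: inv_into_f_f)
      moreover have "\<phi> \<gamma> \<in> \<Gamma>" using imphi gam by blast
      ultimately show "\<psi> \<gamma> = xi g (xi (d, mat 1) (\<phi> \<gamma>))" using g(2) by metis
    qed
    thus "\<exists>d\<in>\<Delta>. \<exists>g\<in>\<Gamma>. \<forall>\<gamma>\<in>\<Gamma>. \<psi> \<gamma> = xi g (xi (d, mat 1) (\<phi> \<gamma>))" using dD g(1) by blast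
  qed
qed

end
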